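(* In the deterministic $\mathsf{CD}$ model, deterministic $\mathsf{SR}$-communication with messages in $\{1,\ldots,M\}$ can be solved in $O(\min\{M,N\})$ time using $O(\min\{\log M,\log N\})$ energy.
   Context: Radio network: connected undirected graph; synchronized slots; each vertex transmits, listens or idles per slot, transmit/listen costing one unit of energy (energy = maximum per-vertex number of such slots). $\mathsf{CD}$: a listener receives the message if exactly one neighbor transmits, hears silence if none, and noise (distinguishable from silence) if at least two. Deterministic setting: vertices have distinct IDs in $\{1,\ldots,N\}$. $N^+(v)=N(v)\cup\{v\}$. Deterministic $\mathsf{SR}$-communication: given two (not necessarily disjoint) vertex sets $S$ and $R$, each $u\in S$ has a message $m_u\in\{1,\ldots,M\}$, and the goal is that every $v\in R$ with $N^+(v)\cap S\neq\emptyset$ learns $m_u$ for some $u\in N^+(v)\cap S$. *)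

theory Defs
  imports Complex_Main
begin

text \<open>Vertices are identified with their distinct IDs, so the vertex set V is a
  subset of {1..N}.\<close>

datatype action = Transmit nat | Listen | Idle

datatype feedback = Silence | Noise | Received nat | NoFeedback

fun is_transmit :: "action \<Rightarrow> bool" where
  "is_transmit (Transmit _) = True"
| "is_transmit _ = False"

fun payload :: "action \<Rightarrow> nat" where
  "payload (Transmit m) = m"
| "payload _ = 0"

text \<open>Input of a vertex: its message if it is in S, and whether it is in R.\<close>
type_synonym input = "nat option \<times> bool"

text \<open>Local rule of a deterministic protocol (already instantiated with N and M):
  own ID, own input, history of feedbacks so far \<mapsto> action of the current slot.\<close>
type_synonym local_rule = "nat \<Rightarrow> input \<Rightarrow> feedback list \<Rightarrow> action"

definition cd_feedback :: "(nat \<Rightarrow> nat \<Rightarrow> bool) \<Rightarrow> (nat \<Rightarrow> action) \<Rightarrow> nat \<Rightarrow> feedback" where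
  "cd_feedback adj A v =
     (if A v = Listen then
        (if (\<exists>!u. adj v u \<and> is_transmit (A u))
         then Received (payload (A (THE u. adj v u \<and> is_transmit (A u))))
         else if (\<exists>u. adj v u \<and> is_transmit (A u)) then Noise else Silence)
      else NoFeedback)"

primrec histories :: "local_rule \<Rightarrow> (nat \<Rightarrow> nat \<Rightarrow> bool) \<Rightarrow> (nat \<Rightarrow> input) \<Rightarrow> nat \<Rightarrow> nat \<Rightarrow> feedback list" where
  "histories P adj inp 0 = (\<lambda>v. [])"
| "histories P adj inp (Suc t) =
     (let h = histories P adj inp t;
          A = (\<lambda>u. P u (inp u) (h u))
      in (\<lambda>v. h v @ [cd_feedback adj A v]))"

definition simple_graph :: "nat set \<Rightarrow> (nat \<Rightarrow> nat \<Rightarrow> bool) \<Rightarrow> bool" where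
  "simple_graph V adj \<longleftrightarrow> finite V \<and>
     (\<forall>u v. adj u v \<longrightarrow> u \<in> V \<and> v \<in> V \<and> u \<noteq> v \<and> adj v u)"

definition connected_graph :: "nat set \<Rightarrow> (nat \<Rightarrow> nat \<Rightarrow> bool) \<Rightarrow> bool" where
  "connected_graph V adj \<longleftrightarrow> V \<noteq> {} \<and> (\<forall>u\<in>V. \<forall>v\<in>V. adj\<^sup>*\<^sup>* u v)"

end

theory Submission
  imports Defs
begin

definition Kp :: "nat \<Rightarrow> nat \<Rightarrow> nat" where "Kp N M = min M N"
definition Bp :: "nat \<Rightarrow> nat \<Rightarrow> nat" where "Bp N M = (LEAST b. Kp N M \<le> 2^b)"
definition lvl :: "nat \<Rightarrow> nat" where "lvl t = (LEAST j. t + 2 < 2^(Suc j))"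

fun dec :: "feedback list \<Rightarrow> nat \<Rightarrow> nat" where
  "dec hs 0 = 0"
| "dec hs (Suc j) = 2 * dec hs j + (if hs ! (2^(Suc j) - 2 + 2 * dec hs j + 1) = Silence then 0 else 1)"

definition kv :: "nat \<Rightarrow> nat \<Rightarrow> nat \<Rightarrow> nat \<Rightarrow> nat" where
  "kv N M v m = (if M \<le> N then m - 1 else v - 1)"

definition lrule :: "nat \<Rightarrow> nat \<Rightarrow> local_rule" where
  "lrule N M v inp hs = (let B = Bp N M; t = length hs; j = lvl t; i = t + 2 - 2^j in
     (case fst inp of
        Some m \<Rightarrow> (if j \<le> Suc B \<and> i = kv N M v m div 2^(B - j) then Transmit m else Idle)
      | None \<Rightarrow> (if snd inp \<and> (if j \<le> B then i = 2 * dec hs (j - 1) + 1 else j = Suc B \<and> i = dec hs B)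
                 then Listen else Idle)))"

definition outf :: "nat \<Rightarrow> nat \<Rightarrow> nat \<Rightarrow> input \<Rightarrow> feedback list \<Rightarrow> nat option" where
  "outf N M v inp hs = (case fst inp of Some m \<Rightarrow> Some m | None \<Rightarrow>
      (if M \<le> N then Some (dec hs (Bp N M) + 1) else
        (case hs ! (2^(Suc (Bp N M)) - 2 + dec hs (Bp N M)) of Received m \<Rightarrow> Some m | _ \<Rightarrow> None)))"

definition Tt :: "nat \<Rightarrow> nat \<Rightarrow> nat" where
  "Tt N M = 2^(Suc (Bp N M)) - 2 + 2^(Bp N M)"

lemma hist_len: "length (histories P adj inp t v) = t"
  by (induction t arbitrary: v) (auto simp: Let_def)

lemma hist_nth: "s < t \<Longrightarrow> histories P adj inp t v ! s =
   cd_feedback adj (\<lambda>u. P u (inp u) (histories P adj inp s u)) v"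
proof (induction t)
  case 0 then show ?case by simp
next
  case (Suc t)
  show ?case
  proof (cases "s < t")
    case True then show ?thesis using Suc by (simp add: Let_def nth_append hist_len)
  next
    case False then have "s = t" using Suc by simp
    then show ?thesis by (simp add: Let_def nth_append hist_len)
  qed
qed

lemma hist_take: "t \<le> t' \<Longrightarrow> histories P adj inp t v = take t (histories P adj inp t' v)"
  by (rule nth_equalityI) (auto simp: hist_len hist_nth)

lemma lvl_eq: "2^j \<le> t + 2 \<Longrightarrow> t + 2 < 2^(Suc j) \<Longrightarrow> lvl t = j"
  unfolding lvl_def
proof (rule Least_equality)
  fix y assume a: "2^j \<le> t + 2" "t + 2 < (2::nat)^(Suc y)"
  show "j \<le> y"
  proof (rule ccontr)
    assume "\<not> j \<le> y" then have "Suc y \<le> j" by simp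
    then have "(2::nat)^(Suc y) \<le> 2^j" by (rule power_increasing) simp
    then show False using a by simp
  qed
qed simp

lemma lvl_prop: "2^(lvl t) \<le> t + 2 \<and> t + 2 < 2^(Suc (lvl t)) \<and> 1 \<le> lvl t"
proof -
  obtain n where n: "2^n \<le> t + 2" "t + 2 < (2::nat)^(n+1)" using ex_power_ivl1[of 2 "t+2"] by auto
  then have "lvl t = n" by (intro lvl_eq) auto
  moreover have "1 \<le> n" using n by (cases n) auto
  ultimately show ?thesis using n by simp
qed

lemma dec_lt: "dec hs j < 2^j"
  by (induction j) auto

lemma dec_take: "2^(Suc j) - 2 \<le> n \<Longrightarrow> dec (take n hs) j = dec hs j"
proof (induction j)
  case 0 then show ?case by simp
next
  case (Suc j)
  have "2^(Suc j) - 2 \<le> (2::nat)^(Suc (Suc j)) - 2" by simp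
  then have IH: "dec (take n hs) j = dec hs j" using Suc by linarith
  have "dec hs j < 2^j" by (rule dec_lt)
  then have "2^(Suc j) - 2 + 2 * dec hs j + 1 < n"
  proof -
    have "(2::nat)^Suc j = 2*2^j" "(2::nat)^Suc (Suc j) = 4*2^j" "(1::nat) \<le> 2^j" by simp_all
    then show ?thesis using \<open>dec hs j < 2^j\<close> Suc.prems by linarith
  qed
  then show ?case using IH by simp
qed


definition inpf :: "nat set \<Rightarrow> nat set \<Rightarrow> (nat \<Rightarrow> nat) \<Rightarrow> nat \<Rightarrow> input" where
  "inpf S R msg = (\<lambda>u. (if u \<in> S then Some (msg u) else None, u \<in> R))"

lemma fb_silence: "cd_feedback adj A v = Silence \<longleftrightarrow> A v = Listen \<and> \<not> (\<exists>u. adj v u \<and> is_transmit (A u))"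
  unfolding cd_feedback_def by auto

lemma fb_unique:
  assumes a1: "A v = Listen" and a2: "adj v u" and a3: "is_transmit (A u)"
    and a4: "\<And>w. adj v w \<Longrightarrow> is_transmit (A w) \<Longrightarrow> w = u"
  shows "cd_feedback adj A v = Received (payload (A u))"
proof -
  have ex1: "\<exists>!w. adj v w \<and> is_transmit (A w)"
  proof (rule ex1I[of _ u])
    show "adj v u \<and> is_transmit (A u)" using a2 a3 by (rule conjI)
    fix w assume "adj v w \<and> is_transmit (A w)"
    then show "w = u" using a4 by blast
  qed
  have th: "(THE w. adj v w \<and> is_transmit (A w)) = u"
  proof (rule the_equality)
    show "adj v u \<and> is_transmit (A u)" using a2 a3 by (rule conjI)
    fix w assume "adj v w \<and> is_transmit (A w)"
    then show "w = u" using a4 by blast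
  qed
  show ?thesis unfolding cd_feedback_def using a1 ex1 th by simp
qed

lemma Bp_prop: "Kp N M \<le> 2^(Bp N M)"
  unfolding Bp_def by (rule LeastI[of _ "Kp N M"]) simp

lemma Bp_prop2: "0 < Bp N M \<Longrightarrow> 2^(Bp N M - 1) < Kp N M"
proof -
  assume "0 < Bp N M"
  then have "Bp N M - 1 < Bp N M" by simp
  then have "\<not> Kp N M \<le> 2^(Bp N M - 1)" unfolding Bp_def by (rule not_less_Least)
  then show ?thesis by simp
qed

context
  fixes N M :: nat and V :: "nat set" and adj S R and msg :: "nat \<Rightarrow> nat"
  assumes N1: "1 \<le> N" and M1: "1 \<le> M" and VN: "V \<subseteq> {1..N}"
    and sg: "simple_graph V adj" and SV: "S \<subseteq> V" and RV: "R \<subseteq> V"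
    and msgM: "\<forall>u\<in>S. msg u \<in> {1..M}"
begin

abbreviation "H \<equiv> histories (lrule N M) adj (inpf S R msg)"
abbreviation "B \<equiv> Bp N M"
abbreviation "A s \<equiv> (\<lambda>u. lrule N M u (inpf S R msg u) (H s u))"

lemma act_S: "u \<in> S \<Longrightarrow> A s u = (if lvl s \<le> Suc B \<and> s + 2 - 2^(lvl s) = kv N M u (msg u) div 2^(B - lvl s)
    then Transmit (msg u) else Idle)"
  by (simp add: lrule_def inpf_def hist_len Let_def)

lemma act_nS: "u \<notin> S \<Longrightarrow> \<not> is_transmit (A s u)"
  by (simp add: lrule_def inpf_def hist_len Let_def)

lemma act_L: "v \<notin> S \<Longrightarrow> v \<in> R \<Longrightarrow> A s v = (if (if lvl s \<le> B then s + 2 - 2^(lvl s) = 2 * dec (H s v) (lvl s - 1) + 1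
      else lvl s = Suc B \<and> s + 2 - 2^(lvl s) = dec (H s v) B) then Listen else Idle)"
  by (auto simp add: lrule_def inpf_def hist_len Let_def)

lemma act_other: "v \<notin> S \<Longrightarrow> v \<notin> R \<Longrightarrow> A s v = Idle"
  by (simp add: lrule_def inpf_def hist_len Let_def)

lemma transmit_iff: "is_transmit (A s u) \<longleftrightarrow> u \<in> S \<and> lvl s \<le> Suc B \<and> s + 2 - 2^(lvl s) = kv N M u (msg u) div 2^(B - lvl s)"
  by (cases "u \<in> S") (simp_all add: act_S act_nS)

lemma kv_lt: "u \<in> S \<Longrightarrow> kv N M u (msg u) < 2^B"
proof -
  assume u: "u \<in> S"
  have "kv N M u (msg u) < Kp N M"
  proof (cases "M \<le> N")
    case True
    then have "kv N M u (msg u) = msg u - 1" "Kp N M = M" by (simp_all add: kv_def Kp_def)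
    moreover have "msg u \<in> {1..M}" using u msgM by blast
    ultimately show ?thesis by (metis atLeastAtMost_iff diff_less le_less_trans less_le_trans zero_less_one)
  next
    case False
    then have "kv N M u (msg u) = u - 1" "Kp N M = N" by (simp_all add: kv_def Kp_def)
    moreover have "u \<in> {1..N}" using u SV VN by blast
    ultimately show ?thesis by (metis atLeastAtMost_iff diff_less le_less_trans less_le_trans zero_less_one)
  qed
  then show ?thesis using Bp_prop[of N M] by linarith
qed


lemma div_pow_lt: "(x::nat) < 2^B' \<Longrightarrow> j \<le> B' \<Longrightarrow> x div 2^(B' - j) < 2^j"
proof -
  assume a: "x < 2^B'" "j \<le> B'"
  have "(2::nat)^B' = 2^j * 2^(B'-j)" using a(2) by (simp add: power_add[symmetric])
  then show ?thesis using a(1) by (simp add: div_less_iff_less_mult)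
qed

lemma max_bit:
  fixes X :: "nat set" and d :: nat
  assumes fin: "finite X" and mem: "mx \<in> X" and mx: "\<forall>y\<in>X. y \<le> mx" and d: "0 < d"
  shows "mx div d = 2 * (mx div (2 * d)) + (if \<exists>y\<in>X. y div d = 2 * (mx div (2*d)) + 1 then 1 else 0)"
proof -
  have e: "mx div d = 2 * (mx div (2 * d)) + mx div d mod 2"
    by (simp add: div_mult2_eq mult.commute)
  show ?thesis
  proof (cases "\<exists>y\<in>X. y div d = 2 * (mx div (2*d)) + 1")
    case True
    then obtain y where y: "y \<in> X" "y div d = 2 * (mx div (2*d)) + 1" by blast
    have "y div d \<le> mx div d" using mx y(1) by (simp add: div_le_mono)
    have "mx div d mod 2 < 2" by simp
    then have "mx div d mod 2 = 1" using e y(2) \<open>y div d \<le> mx div d\<close> by linarith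
    then show ?thesis using e True by simp
  next
    case False
    then have "mx div d mod 2 \<noteq> 1" using e mem by force
    then have "mx div d mod 2 = 0" by presburger
    then show ?thesis using e False by simp
  qed
qed

context
  fixes v assumes vR: "v \<in> R" and vS: "v \<notin> S" and vN: "\<exists>u\<in>S. adj v u"
begin

abbreviation "Xs \<equiv> (\<lambda>u. kv N M u (msg u)) ` {u \<in> S. adj v u}"
abbreviation "mx \<equiv> Max Xs"

lemma Xs_fin: "finite Xs"
proof -
  have "finite V" using sg by (simp add: simple_graph_def)
  then have "finite S" using SV by (rule finite_subset[rotated])
  then show ?thesis by simp
qed

lemma Xs_ne: "Xs \<noteq> {}" using vN by blast

lemma mx_mem: "mx \<in> Xs" using Xs_fin Xs_ne by (rule Max_in)
lemma mx_ge: "\<forall>y\<in>Xs. y \<le> mx" using Xs_fin by simp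
lemma mx_lt: "mx < 2^B" using mx_mem kv_lt by auto

lemma inv: "j \<le> B \<Longrightarrow> 2^(Suc j) - 2 \<le> t \<Longrightarrow> dec (H t v) j = mx div 2^(B - j)"
proof (induction j arbitrary: t)
  case 0
  then show ?case using mx_lt by simp
next
  case (Suc j)
  define mp where "mp = mx div 2^(B - j)"
  have p4: "(2::nat)^Suc j = 2*2^j" "(2::nat)^Suc (Suc j) = 4*2^j" "(1::nat) \<le> 2^j" by simp_all
  have IHt: "dec (H t v) j = mp" using Suc p4 unfolding mp_def by (intro Suc.IH) auto
  have mplt: "mp < 2^j" unfolding mp_def using mx_lt Suc.prems by (intro div_pow_lt) auto
  define s where "s = 2^(Suc j) - 2 + 2*mp + 1"
  have st: "s < t" using Suc.prems p4 mplt unfolding s_def by linarith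
  have ss: "2^(Suc j) - 2 \<le> s" unfolding s_def by simp
  have lv: "lvl s = Suc j" using p4 mplt unfolding s_def by (intro lvl_eq) auto
  have idx: "s + 2 - 2^(lvl s) = 2*mp + 1" 
  proof -
    have "s + 2 - 2^(lvl s) = s + 2 - 2^Suc j" using lv by simp
    then show ?thesis using p4 s_def by linarith
  qed
  have idx2: "s + 2 - 2^(Suc j) = 2*mp + 1" using idx lv by simp
  have IHs: "dec (H s v) j = mp" using Suc.prems ss unfolding mp_def by (intro Suc.IH) auto
  have lis: "A s v = Listen" using act_L[OF vS vR, of s] lv idx IHs Suc.prems by simp
  have tr: "(\<exists>u. adj v u \<and> is_transmit (A s u)) \<longleftrightarrow>
     (\<exists>y\<in>Xs. y div 2^(B - Suc j) = 2 * mp + 1)"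
    unfolding transmit_iff lv using Suc.prems idx2 by auto
  have fb: "H t v ! s = cd_feedback adj (A s) v" using st by (rule hist_nth)
  have sil: "(H t v ! s = Silence) \<longleftrightarrow> \<not> (\<exists>y\<in>Xs. y div 2^(B - Suc j) = 2 * mp + 1)"
    unfolding fb fb_silence using lis tr by simp
  have "dec (H t v) (Suc j) = 2 * mp + (if \<exists>y\<in>Xs. y div 2^(B - Suc j) = 2 * mp + 1 then 1 else 0)"
    using IHt sil s_def by simp
  also have "\<dots> = mx div 2^(B - Suc j)"
  proof -
    have "(2::nat)^(B - j) = 2 * 2^(B - Suc j)" using Suc.prems
      by (metis Suc_diff_le Suc_le_lessD diff_Suc_Suc power_Suc)
    then have "mp = mx div (2 * 2^(B - Suc j))" unfolding mp_def by simp
    then show ?thesis using max_bit[OF Xs_fin mx_mem mx_ge, of "2^(B - Suc j)"] by simp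
  qed
  finally show ?case .
qed


lemma decB: "dec (H (Tt N M) v) B = mx"
  using inv[of B "Tt N M"] by (simp add: Tt_def)

lemma correct: "\<exists>u\<in>S. adj v u \<and> outf N M v (inpf S R msg v) (H (Tt N M) v) = Some (msg u)"
proof (cases "M \<le> N")
  case True
  obtain u where u: "u \<in> S" "adj v u" "kv N M u (msg u) = mx" using mx_mem by auto
  have "1 \<le> msg u" using u msgM by auto
  moreover have "kv N M u (msg u) = msg u - 1" using True by (simp add: kv_def)
  ultimately have "mx + 1 = msg u" using u(3) by linarith
  then show ?thesis using u True decB vS by (auto simp: outf_def inpf_def)
next
  case False
  obtain u where u: "u \<in> S" "adj v u" "kv N M u (msg u) = mx" using mx_mem by auto
  define s where "s = 2^(Suc B) - 2 + mx"
  have p4: "(2::nat)^Suc B = 2*2^B" "(2::nat)^Suc (Suc B) = 4*2^B" "(1::nat) \<le> 2^B" by simp_all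
  have st: "s < Tt N M" using mx_lt p4 unfolding s_def Tt_def by linarith
  have ss: "2^(Suc B) - 2 \<le> s" unfolding s_def by simp
  have lv: "lvl s = Suc B" using p4 mx_lt unfolding s_def by (intro lvl_eq) auto
  have idx2: "s + 2 - 2^(Suc B) = mx" using p4 s_def by linarith
  have idx: "s + 2 - 2^(lvl s) = mx" using idx2 lv by simp
  have decs: "dec (H s v) B = mx" using inv[of B s] ss by simp
  have lis: "A s v = Listen" using act_L[OF vS vR, of s] lv idx decs by simp
  have tu: "is_transmit (A s u)" unfolding transmit_iff lv using u idx2 by simp
  have au: "A s u = Transmit (msg u)" using act_S[OF u(1), of s] lv idx2 u(3) by simp
  have uniq: "w = u" if "adj v w" "is_transmit (A s w)" for w
  proof -
    have w: "w \<in> S" "s + 2 - 2^(Suc B) = kv N M w (msg w)" using that unfolding transmit_iff lv by auto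
    then have "w - 1 = u - 1" using u(3) idx2 False by (simp add: kv_def)
    moreover have "w \<in> {1..N}" using w(1) SV VN by blast
    then have "1 \<le> w" by simp
    moreover have "u \<in> {1..N}" using u(1) SV VN by blast
    then have "1 \<le> u" by simp
    ultimately show ?thesis by linarith
  qed
  have "H (Tt N M) v ! s = Received (msg u)"
    using hist_nth[OF st] fb_unique[where A="A s" and v=v and adj=adj and u=u, OF lis u(2) tu uniq] au by simp
  then show ?thesis using u False decB vS s_def by (auto simp: outf_def inpf_def)
qed
end


lemma energy: "card {t. t < Tt N M \<and> A t v \<noteq> Idle} \<le> Suc B"
proof -
  define T where "T = Tt N M"
  define g where "g j = (if v \<in> S then kv N M v (msg v) div 2^(B - j)
      else if j \<le> B then 2 * dec (H T v) (j - 1) + 1 else dec (H T v) B)" for j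
  have sub: "{t. t < T \<and> A t v \<noteq> Idle} \<subseteq> (\<lambda>j. 2^j - 2 + g j) ` {1..Suc B}"
  proof
    fix t assume "t \<in> {t. t < T \<and> A t v \<noteq> Idle}"
    then have tT: "t < T" and act: "A t v \<noteq> Idle" by auto
    define j where "j = lvl t"
    have jp: "2^j \<le> t + 2" "1 \<le> j" using lvl_prop[of t] unfolding j_def by auto
    have tk: "H t v = take t (H T v)" using tT by (intro hist_take) simp
    have main: "j \<le> Suc B \<and> t + 2 - 2^j = g j"
    proof (cases "v \<in> S")
      case True
      have "lvl t \<le> Suc B \<and> t + 2 - 2^(lvl t) = kv N M v (msg v) div 2^(B - lvl t)"
        using act act_S[OF True, of t] by metis
      then show ?thesis using True unfolding g_def j_def by simp
    next
      case nS: False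
      show ?thesis
      proof (cases "v \<in> R")
        case True
        have c: "if j \<le> B then t + 2 - 2^j = 2 * dec (H t v) (j - 1) + 1
          else j = Suc B \<and> t + 2 - 2^j = dec (H t v) B"
          using act act_L[OF nS True, of t] unfolding j_def by metis
        show ?thesis
        proof (cases "j \<le> B")
          case True
          have "Suc (j - 1) = j" using jp by simp
          then have "2^(Suc (j-1)) - 2 \<le> t" using jp by simp
          then have "dec (H t v) (j - 1) = dec (H T v) (j - 1)" unfolding tk by (rule dec_take)
          then show ?thesis using c True nS unfolding g_def by simp
        next
          case False
          then have e: "j = Suc B" "t + 2 - 2^j = dec (H t v) B" using c by auto
          then have "2^(Suc B) - 2 \<le> t" using jp by simp
          then have "dec (H t v) B = dec (H T v) B" unfolding tk by (rule dec_take)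
          then show ?thesis using e nS unfolding g_def by simp
        qed
      next
        case False
        then show ?thesis using act act_other[OF nS False] by simp
      qed
    qed
    have "(2::nat)^1 \<le> 2^j" using jp(2) by (rule power_increasing) simp
    then have two: "(2::nat) \<le> 2^j" by simp
    have "t = 2^j - 2 + g j" using main jp two by linarith
    then show "t \<in> (\<lambda>j. 2^j - 2 + g j) ` {1..Suc B}" using main jp by auto
  qed
  have "card {t. t < T \<and> A t v \<noteq> Idle} \<le> card ((\<lambda>j. 2^j - 2 + g j) ` {1..Suc B})"
    by (rule card_mono[OF _ sub]) simp
  also have "\<dots> \<le> card {1..Suc B}" by (rule card_image_le) simp
  finally show ?thesis unfolding T_def by simp
qed
end


lemma Kp1: "1 \<le> N \<Longrightarrow> 1 \<le> M \<Longrightarrow> 1 \<le> Kp N M" by (simp add: Kp_def)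

lemma Bbound: assumes "1 \<le> N" "1 \<le> M"
  shows "real (Suc (Bp N M)) \<le> 6 * log 2 (real (min M N)) + 6"
proof -
  have K: "1 \<le> real (min M N)" using assms by simp
  have lg: "0 \<le> log 2 (real (min M N))" using K by simp
  show ?thesis
  proof (cases "Bp N M = 0")
    case True then show ?thesis using lg by simp
  next
    case False
    then have "2^(Bp N M - 1) < Kp N M" by (intro Bp_prop2) simp
    then have "real (2^(Bp N M - 1)) < real (min M N)" unfolding Kp_def by linarith
    then have "(2::real) powr real (Bp N M - 1) < real (min M N)" by (simp add: powr_realpow)
    then have "real (Bp N M - 1) < log 2 (real (min M N))"
      using K by (simp add: less_log_iff)
    then show ?thesis using lg False by linarith
  qed
qed

lemma Tbound: assumes "1 \<le> N" "1 \<le> M" shows "real (Tt N M) \<le> 6 * real (min M N)"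
proof -
  have b: "2^(Bp N M) \<le> 2 * Kp N M"
  proof (cases "Bp N M = 0")
    case True then show ?thesis using Kp1[OF assms] by simp
  next
    case False
    then have "2^(Bp N M - 1) < Kp N M" by (intro Bp_prop2) simp
    moreover have "(2::nat)^(Bp N M) = 2 * 2^(Bp N M - 1)" using False
      by (metis Suc_pred' bot_nat_0.not_eq_extremum power_Suc)
    ultimately show ?thesis by linarith
  qed
  have "Tt N M \<le> 6 * Kp N M" unfolding Tt_def using b by simp
  then show ?thesis unfolding Kp_def by linarith
qed

theorem lemma14:
  shows "\<exists>(act :: nat \<Rightarrow> nat \<Rightarrow> local_rule)
            (out :: nat \<Rightarrow> nat \<Rightarrow> nat \<Rightarrow> input \<Rightarrow> feedback list \<Rightarrow> nat option)
            (T :: nat \<Rightarrow> nat \<Rightarrow> nat) (c :: real).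
     \<forall>N M V adj S R (msg :: nat \<Rightarrow> nat).
       1 \<le> N \<longrightarrow> 1 \<le> M \<longrightarrow> V \<subseteq> {1..N} \<longrightarrow>
       simple_graph V adj \<longrightarrow> connected_graph V adj \<longrightarrow>
       S \<subseteq> V \<longrightarrow> R \<subseteq> V \<longrightarrow> (\<forall>u\<in>S. msg u \<in> {1..M}) \<longrightarrow>
       (let inp = (\<lambda>u. (if u \<in> S then Some (msg u) else None, u \<in> R));
            P = act N M;
            h = histories P adj inp
        in (\<forall>v\<in>R. (\<exists>u\<in>S. u = v \<or> adj v u) \<longrightarrow>
               (\<exists>u\<in>S. (u = v \<or> adj v u) \<and> out N M v (inp v) (h (T N M) v) = Some (msg u)))
           \<and> (\<forall>v\<in>V. real (card {t. t < T N M \<and> P v (inp v) (h t v) \<noteq> Idle})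
                      \<le> c * log 2 (real (min M N)) + c)
           \<and> real (T N M) \<le> c * real (min M N))"
proof -
  have "\<forall>N M V adj S R (msg :: nat \<Rightarrow> nat).
       1 \<le> N \<longrightarrow> 1 \<le> M \<longrightarrow> V \<subseteq> {1..N} \<longrightarrow>
       simple_graph V adj \<longrightarrow> connected_graph V adj \<longrightarrow>
       S \<subseteq> V \<longrightarrow> R \<subseteq> V \<longrightarrow> (\<forall>u\<in>S. msg u \<in> {1..M}) \<longrightarrow>
       (let inp = (\<lambda>u. (if u \<in> S then Some (msg u) else None, u \<in> R));
            P = lrule N M;
            h = histories P adj inp
        in (\<forall>v\<in>R. (\<exists>u\<in>S. u = v \<or> adj v u) \<longrightarrow>
               (\<exists>u\<in>S. (u = v \<or> adj v u) \<and> outf N M v (inp v) (h (Tt N M) v) = Some (msg u)))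
           \<and> (\<forall>v\<in>V. real (card {t. t < Tt N M \<and> P v (inp v) (h t v) \<noteq> Idle})
                      \<le> 6 * log 2 (real (min M N)) + 6)
           \<and> real (Tt N M) \<le> 6 * real (min M N))"
  proof (intro allI impI)
    fix N M V adj S R and msg :: "nat \<Rightarrow> nat"
    assume a: "1 \<le> N" "1 \<le> M" "V \<subseteq> {1..N}" "simple_graph V adj" "connected_graph V adj"
      "S \<subseteq> V" "R \<subseteq> V" "\<forall>u\<in>S. msg u \<in> {1..M}"
    have e: "(\<lambda>u. (if u \<in> S then Some (msg u) else None, u \<in> R)) = inpf S R msg"
      by (simp add: inpf_def)
    have c1: "\<forall>v\<in>R. (\<exists>u\<in>S. u = v \<or> adj v u) \<longrightarrow>
               (\<exists>u\<in>S. (u = v \<or> adj v u) \<and> outf N M v (inpf S R msg v) (histories (lrule N M) adj (inpf S R msg) (Tt N M) v) = Some (msg u))"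
    proof (intro ballI impI)
      fix v assume v: "v \<in> R" "\<exists>u\<in>S. u = v \<or> adj v u"
      show "\<exists>u\<in>S. (u = v \<or> adj v u) \<and> outf N M v (inpf S R msg v) (histories (lrule N M) adj (inpf S R msg) (Tt N M) v) = Some (msg u)"
      proof (cases "v \<in> S")
        case True
        then show ?thesis by (auto simp: outf_def inpf_def)
      next
        case False
        then have "\<exists>u\<in>S. adj v u" using v by blast
        then show ?thesis using correct[OF a(1,2,3,4,6,7,8) v(1) False] by blast
      qed
    qed
    have c2: "\<forall>v\<in>V. real (card {t. t < Tt N M \<and> lrule N M v (inpf S R msg v) (histories (lrule N M) adj (inpf S R msg) t v) \<noteq> Idle})
                      \<le> 6 * log 2 (real (min M N)) + 6"
    proof
      fix v assume "v \<in> V"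
      have "card {t. t < Tt N M \<and> lrule N M v (inpf S R msg v) (histories (lrule N M) adj (inpf S R msg) t v) \<noteq> Idle} \<le> Suc (Bp N M)"
        by (rule energy[OF a(1,2,3,4,6,7,8)])
      then have "real (card {t. t < Tt N M \<and> lrule N M v (inpf S R msg v) (histories (lrule N M) adj (inpf S R msg) t v) \<noteq> Idle}) \<le> real (Suc (Bp N M))"
        by linarith
      then show "real (card {t. t < Tt N M \<and> lrule N M v (inpf S R msg v) (histories (lrule N M) adj (inpf S R msg) t v) \<noteq> Idle})
                      \<le> 6 * log 2 (real (min M N)) + 6" using Bbound[OF a(1,2)] by linarith
    qed
    show "let inp = (\<lambda>u. (if u \<in> S then Some (msg u) else None, u \<in> R));
            P = lrule N M;
            h = histories P adj inp
        in (\<forall>v\<in>R. (\<exists>u\<in>S. u = v \<or> adj v u) \<longrightarrow>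
               (\<exists>u\<in>S. (u = v \<or> adj v u) \<and> outf N M v (inp v) (h (Tt N M) v) = Some (msg u)))
           \<and> (\<forall>v\<in>V. real (card {t. t < Tt N M \<and> P v (inp v) (h t v) \<noteq> Idle})
                      \<le> 6 * log 2 (real (min M N)) + 6)
           \<and> real (Tt N M) \<le> 6 * real (min M N)"
      unfolding Let_def e using c1 c2 Tbound[OF a(1,2)] by blast
  qed
  then show ?thesis by blast
qed

end
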